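(* Let $$A= \begin{pmatrix} 1& -2& 2\\ 2&-1& 2\\ 2&-2& 3 \end{pmatrix}.$$ For every positive integer $n$, the triple $A^n(3,4,5)^\top$ is a primitive Pythagorean triple $(x,y,z)$, and the inradius of the triangle with side lengths $x,y,z$ is $n+1$.
   Context: A primitive Pythagorean triple is a triple $(x,y,z)$ of positive integers with $x^2+y^2=z^2$, $\gcd(x,y)=1$ and $x$ odd. Triples are regarded as row vectors and $\top$ denotes transpose. *)

theory Defs
  imports "HOL-Analysis.Analysis"
begin

primrec matpow :: "'a::comm_ring_1^'n^'n \<Rightarrow> nat \<Rightarrow> 'a^'n^'n" where
  "matpow A 0 = mat 1"
| "matpow A (Suc k) = A ** matpow A k"

definition A_mat :: "int^3^3" where
  "A_mat = vector [vector [1, -2, 2], vector [2, -1, 2], vector [2, -2, 3]]"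

definition v345 :: "int^3" where
  "v345 = vector [3, 4, 5]"

definition primitive_pythagorean_triple :: "int \<Rightarrow> int \<Rightarrow> int \<Rightarrow> bool" where
  "primitive_pythagorean_triple x y z \<longleftrightarrow>
     x > 0 \<and> y > 0 \<and> z > 0 \<and> x^2 + y^2 = z^2 \<and> gcd x y = 1 \<and> odd x"

text \<open>Inradius of a triangle with side lengths a, b, c: area / semiperimeter, area by Heron.\<close>
definition inradius :: "real \<Rightarrow> real \<Rightarrow> real \<Rightarrow> real" where
  "inradius a b c = (let s = (a + b + c) / 2 in sqrt (s * (s - a) * (s - b) * (s - c)) / s)"

end

theory Submission
  imports Defs
begin

lemma A_mul: "A_mat *v (vector [a, b, c] :: int^3) = vector [a - 2*b + 2*c, 2*a - b + 2*c, 2*a - 2*b + 3*c]"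
  by (simp add: vec_eq_iff forall_3 matrix_vector_mult_def sum_3 A_mat_def)

lemma closed: "matpow A_mat n *v v345 =
  vector [2*(int n+1)+1, 2*(int n+1)*(int n+2), 2*(int n+1)^2 + 2*(int n+1) + 1]"
proof (induction n)
  case 0
  show ?case by (simp add: v345_def)
next
  case (Suc n)
  have "matpow A_mat (Suc n) *v v345 = A_mat *v (matpow A_mat n *v v345)"
    by (simp add: matrix_vector_mul_assoc)
  also have "\<dots> = vector [2*(int (Suc n)+1)+1, 2*(int (Suc n)+1)*(int (Suc n)+2), 2*(int (Suc n)+1)^2 + 2*(int (Suc n)+1) + 1]"
    unfolding Suc A_mul by (simp add: algebra_simps power2_eq_square)
  finally show ?case .
qed

theorem mainTheorem2:
  fixes n :: nat
  assumes "n \<ge> 1"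
  shows "let w = matpow A_mat n *v v345 in
           primitive_pythagorean_triple (w $ 1) (w $ 2) (w $ 3) \<and>
           inradius (of_int (w $ 1)) (of_int (w $ 2)) (of_int (w $ 3)) = real n + 1"
proof -
  define k where "k = int n + 1"
  have k0: "k > 0" unfolding k_def by simp
  have w: "matpow A_mat n *v v345 = vector [2*k+1, 2*k*(k+1), 2*k^2+2*k+1]"
    unfolding closed k_def by (simp add: algebra_simps)
  have g: "gcd (2*k+1) (2*k*(k+1)) = 1"
  proof -
    have "gcd (2*k+1) (2*k*(k+1)) dvd (2*k+1)*(2*k+1) - 2*(2*k*(k+1))"
      proof (rule dvd_diff)
      show "gcd (2*k+1) (2*k*(k+1)) dvd (2*k+1)*(2*k+1)" by (rule dvd_mult2) simp
      show "gcd (2*k+1) (2*k*(k+1)) dvd 2*(2*k*(k+1))" by (rule dvd_mult) simp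
    qed
    moreover have "(2*k+1)*(2*k+1) - 2*(2*k*(k+1)) = 1" by (simp add: algebra_simps)
    ultimately show ?thesis by (metis gcd_ge_0_int is_unit_gcd zdvd1_eq abs_of_nonneg)
  qed
  have ppt: "primitive_pythagorean_triple (2*k+1) (2*k*(k+1)) (2*k^2+2*k+1)"
  proof -
    have "2*k*(k+1) > 0" using k0 by simp
    moreover have "2*k^2+2*k+1 > 0" using k0 by (simp add: add_pos_pos)
    ultimately show ?thesis unfolding primitive_pythagorean_triple_def using k0 g
      by (simp add: algebra_simps power2_eq_square)
  qed
  define r where "r = real_of_int k"
  have r0: "r > 0" using k0 r_def by simp
  have ir: "inradius (2*r+1) (2*r*(r+1)) (2*r^2+2*r+1) = r"
  proof -
    have s: "(2*r+1 + 2*r*(r+1) + (2*r^2+2*r+1)) / 2 = (2*r+1)*(r+1)"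
      by (simp add: algebra_simps power2_eq_square)
    have p: "(2*r+1)*(r+1) * ((2*r+1)*(r+1) - (2*r+1)) * ((2*r+1)*(r+1) - 2*r*(r+1))
         * ((2*r+1)*(r+1) - (2*r^2+2*r+1)) = ((2*r+1)*(r+1)*r)^2"
      by (simp add: algebra_simps power2_eq_square)
    have q: "sqrt (((2*r+1)*(r+1)*r)^2) = (2*r+1)*(r+1)*r" using r0 by simp
    have ne: "(2*r+1)*(r+1) \<noteq> 0" using r0 by (simp add: add_pos_pos)
    show ?thesis unfolding inradius_def Let_def s p q using ne
      by (simp add: mult.commute)
  qed
  show ?thesis unfolding w Let_def
    using ppt ir by (simp add: r_def k_def)
qed

end
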